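(* Let $\mathcal{G}=(V,E)$ be a connected hypergraph with $n\ge 3$ vertices such that $\mathcal{G}$ contains at least one pair of nonadjacent vertices and $d_{\max}\le cr(\mathcal{G})$. Then $\lambda_2(L_{\mathcal{G}})\le\kappa_W(\mathcal{G})$.
   Context: A hypergraph $\mathcal{G}=(V,E)$ has a finite vertex set $V$ and a set $E$ of subsets of $V$ (edges), each of cardinality at least $2$. Two distinct vertices $i,j$ are adjacent ($i\sim j$) if some edge contains both. The degree $d_i$ is the number of edges containing $i$, $d_{\max}=\max_i d_i$, and the co-rank $cr(\mathcal{G})$ is the minimum cardinality of an edge. The adjacency matrix $A_{\mathcal{G}}$ has $(A_{\mathcal{G}})_{ij}=\sum_{e\in E,\, i,j\in e}\frac{1}{|e|-1}$ for $i\ne j$ and zero diagonal; the Laplacian is $L_{\mathcal{G}}=D_{\mathcal{G}}-A_{\mathcal{G}}$ with $D_{\mathcal{G}}=\mathrm{diag}(d_i)$, i.e. $(L_{\mathcal{G}}f)(i)=\sum_{j\sim i}\sum_{e\ni i,j}\frac{1}{|e|-1}(f(i)-f(j))$. Its eigenvalues are ordered $\lambda_1(L_{\mathcal{G}})\le\lambda_2(L_{\mathcal{G}})\le\dots\le\lambda_n(L_{\mathcal{G}})$. Weak deletion of a set of vertices removes those vertices from $V$ and from every edge containing them. A weak vertex cut is a set of vertices whose weak deletion increases the number of connected components; $\kappa_W(\mathcal{G})$ is the minimum size of a weak vertex cut. *)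

theory Defs
  imports "HOL-Combinatorics.Permutations" "HOL-Computational_Algebra.Polynomial"
begin

definition hypergraph :: "'a set \<Rightarrow> 'a set set \<Rightarrow> bool" where
  "hypergraph V E \<longleftrightarrow> finite V \<and> (\<forall>e\<in>E. e \<subseteq> V \<and> card e \<ge> 2)"

definition adjacent :: "'a set set \<Rightarrow> 'a \<Rightarrow> 'a \<Rightarrow> bool" where
  "adjacent E i j \<longleftrightarrow> i \<noteq> j \<and> (\<exists>e\<in>E. i \<in> e \<and> j \<in> e)"

definition degree :: "'a set set \<Rightarrow> 'a \<Rightarrow> nat" where
  "degree E i = card {e\<in>E. i \<in> e}"

definition max_degree :: "'a set \<Rightarrow> 'a set set \<Rightarrow> nat" where
  "max_degree V E = Max (degree E ` V)"

definition corank :: "'a set set \<Rightarrow> nat" where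
  "corank E = Min (card ` E)"

definition laplacian :: "'a set set \<Rightarrow> 'a \<Rightarrow> 'a \<Rightarrow> real" where
  "laplacian E i j =
     (if i = j then real (degree E i)
      else - (\<Sum>e\<in>{e\<in>E. i \<in> e \<and> j \<in> e}. 1 / (real (card e) - 1)))"

definition char_poly_on :: "'a set \<Rightarrow> ('a \<Rightarrow> 'a \<Rightarrow> real) \<Rightarrow> real poly" where
  "char_poly_on V M =
     (\<Sum>p\<in>{p. p permutes V}. smult (of_int (sign p))
        (\<Prod>i\<in>V. if p i = i then [:- M i i, 1:] else [:- M i (p i):]))"

text \<open>The eigenvalues (with multiplicity) in nondecreasing order, for a matrix whose
  characteristic polynomial splits over the reals (e.g. a symmetric one).\<close>
definition eigenvalues_sorted :: "'a set \<Rightarrow> ('a \<Rightarrow> 'a \<Rightarrow> real) \<Rightarrow> real list" where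
  "eigenvalues_sorted V M =
     (THE xs. sorted xs \<and> char_poly_on V M = (\<Prod>x\<leftarrow>xs. [:- x, 1:]))"

text \<open>\<lambda>_k, 1-based.\<close>
definition eigenvalue :: "'a set \<Rightarrow> ('a \<Rightarrow> 'a \<Rightarrow> real) \<Rightarrow> nat \<Rightarrow> real" where
  "eigenvalue V M k = eigenvalues_sorted V M ! (k - 1)"

definition reach_rel :: "'a set \<Rightarrow> 'a set set \<Rightarrow> ('a \<times> 'a) set" where
  "reach_rel V E = ({(i, j). i \<in> V \<and> j \<in> V \<and> adjacent E i j})\<^sup>* \<inter> (V \<times> V)"

definition num_components :: "'a set \<Rightarrow> 'a set set \<Rightarrow> nat" where
  "num_components V E = card (V // reach_rel V E)"

definition connected_hg :: "'a set \<Rightarrow> 'a set set \<Rightarrow> bool" where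
  "connected_hg V E \<longleftrightarrow> num_components V E = 1"

text \<open>Weak deletion of S: remove S from V and from every edge (edges that become
  smaller than 2 vertices are discarded; they do not affect adjacency).\<close>
definition weak_del_V :: "'a set \<Rightarrow> 'a set \<Rightarrow> 'a set" where
  "weak_del_V V S = V - S"

definition weak_del_E :: "'a set set \<Rightarrow> 'a set \<Rightarrow> 'a set set" where
  "weak_del_E E S = {e - S | e. e \<in> E \<and> card (e - S) \<ge> 2}"

definition weak_vertex_cut :: "'a set \<Rightarrow> 'a set set \<Rightarrow> 'a set \<Rightarrow> bool" where
  "weak_vertex_cut V E S \<longleftrightarrow> S \<subseteq> V \<and>
     num_components (weak_del_V V S) (weak_del_E E S) > num_components V E"

definition kappa_W :: "'a set \<Rightarrow> 'a set set \<Rightarrow> nat" where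
  "kappa_W V E = Min {card S | S. weak_vertex_cut V E S}"

end

theory Submission
  imports Defs "Jordan_Normal_Form.Schur_Decomposition"
begin


lemma real_sym_eigen:
  fixes A :: "real mat"
  assumes A: "A \<in> carrier_mat n n" and n: "n > 0" and sym: "A\<^sup>T = A"
  shows "\<exists>e v. v \<in> carrier_vec n \<and> v \<noteq> 0\<^sub>v n \<and> A *\<^sub>v v = e \<cdot>\<^sub>v v"
proof -
  define Ac where "Ac = (of_real_hom.mat_hom A :: complex mat)"
  have Ac: "Ac \<in> carrier_mat n n" using A unfolding Ac_def by auto
  obtain as where as: "char_poly Ac = (\<Prod>a\<leftarrow>as. [:- a, 1:])" "length as = n"
    using char_poly_factorized[OF Ac] by blast
  define a where "a = hd as"
  have "a \<in> set as" using as(2) n unfolding a_def by (cases as) auto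
  hence "poly (char_poly Ac) a = 0" unfolding as(1) poly_prod_list prod_list_zero_iff
    by (auto simp: image_iff)
  hence "eigenvalue Ac a" using eigenvalue_root_char_poly[OF Ac] by auto
  then obtain w where w: "eigenvector Ac w a" unfolding eigenvalue_def by auto
  hence wc: "w \<in> carrier_vec n" and w0: "w \<noteq> 0\<^sub>v n" and ev: "Ac *\<^sub>v w = a \<cdot>\<^sub>v w"
    unfolding eigenvector_def using Ac by auto
  have Acij: "Ac $$ (i,j) = complex_of_real (A $$ (i,j))" if "i < n" "j < n" for i j
    using that A unfolding Ac_def by auto
  have Avi: "(Ac *\<^sub>v w) $ i = (\<Sum>j<n. complex_of_real (A $$ (i,j)) * w $ j)" if "i < n" for i
    using that Ac wc Acij by (auto simp: index_mult_mat_vec scalar_prod_def lessThan_atLeast0 intro!: sum.cong)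
  have symij: "A $$ (i,j) = A $$ (j,i)" if "i < n" "j < n" for i j
    using that A sym by (metis carrier_matD(1) carrier_matD(2) index_transpose_mat(1))
  define s where "s = (\<Sum>i<n. cnj (w $ i) * w $ i)"
  define q where "q = (\<Sum>i<n. cnj (w $ i) * (\<Sum>j<n. complex_of_real (A $$ (i,j)) * w $ j))"
  have "q = (\<Sum>i<n. cnj (w $ i) * (a * w $ i))" unfolding q_def
  proof (rule sum.cong[OF refl])
    fix i assume "i \<in> {..<n}"
    hence "(\<Sum>j<n. complex_of_real (A $$ (i,j)) * w $ j) = a * w $ i"
      using Avi[of i] ev wc by auto
    thus "cnj (w $ i) * (\<Sum>j<n. complex_of_real (A $$ (i, j)) * w $ j) = cnj (w $ i) * (a * w $ i)"
      by simp
  qed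
  hence qa: "q = a * s" unfolding s_def by (simp add: sum_distrib_left mult_ac)
  have "cnj q = (\<Sum>i<n. w $ i * (\<Sum>j<n. complex_of_real (A $$ (i,j)) * cnj (w $ j)))"
    unfolding q_def by (simp add: mult.commute)
  also have "\<dots> = (\<Sum>i<n. \<Sum>j<n. complex_of_real (A $$ (i,j)) * cnj (w $ j) * w $ i)"
    by (simp add: sum_distrib_left mult_ac)
  also have "\<dots> = (\<Sum>j<n. \<Sum>i<n. complex_of_real (A $$ (i,j)) * cnj (w $ j) * w $ i)"
    by (rule sum.swap)
  also have "\<dots> = q" unfolding q_def sum_distrib_left
    by (intro sum.cong refl, auto simp: symij mult_ac)
  finally have cq: "cnj q = q" .
  have cs: "cnj s = s" unfolding s_def by (simp add: mult.commute)
  obtain k where k: "k < n" "w $ k \<noteq> 0" using w0 wc by (metis eq_vecI carrier_vecD index_zero_vec)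
  have "Re s = (\<Sum>i<n. (Re (w $ i))\<^sup>2 + (Im (w $ i))\<^sup>2)" unfolding s_def
    by (simp add: Re_sum sum.distrib power2_eq_square)
  also have "\<dots> > 0"
  proof (rule sum_pos2[of _ k])
    show "0 < (Re (w $ k))\<^sup>2 + (Im (w $ k))\<^sup>2" using k(2)
      by (metis add_nonneg_nonneg complex_eq_iff zero_complex.sel(1) zero_complex.sel(2) 
          sum_power2_eq_zero_iff zero_le_power2 order_le_neq_trans)
  qed (use k in auto)
  finally have s0: "s \<noteq> 0" by auto
  have "cnj a * s = a * s" using cq cs qa by (metis complex_cnj_mult)
  hence ca: "cnj a = a" using s0 by simp
  define r where "r = Re a"
  have ar: "a = complex_of_real r" using ca unfolding r_def by (metis Reals_cnj_iff complex_is_Real_iff of_real_Re)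
  have "poly (char_poly Ac) a = 0" using \<open>eigenvalue Ac a\<close> eigenvalue_root_char_poly[OF Ac] by auto
  hence "complex_of_real (poly (char_poly A) r) = 0"
    unfolding Ac_def of_real_hom.char_poly_hom[OF A] ar of_real_hom.poly_map_poly .
  hence "poly (char_poly A) r = 0" by simp
  hence "eigenvalue A r" using eigenvalue_root_char_poly[OF A] by auto
  then obtain v where "eigenvector A v r" unfolding eigenvalue_def by auto
  thus ?thesis unfolding eigenvector_def using A by auto
qed

lemma orthonormal_extend:
  fixes v :: "real vec"
  assumes v: "v \<in> carrier_vec n" and v1: "v \<bullet> v = 1"
  shows "\<exists>us. length us = n \<and> set us \<subseteq> carrier_vec n \<and> hd us = v \<and>
     (\<forall>i<n. \<forall>j<n. us ! i \<bullet> us ! j = (if i = j then 1 else 0))"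
proof -
  interpret cof_vec_space n "TYPE(real)" .
  have v0: "v \<noteq> 0\<^sub>v n" using v1 v by auto
  define b where "b = basis_completion v"
  define ws where "ws = gram_schmidt n b"
  have b: "set b \<subseteq> carrier_vec n" "distinct b" "\<not> lin_dep (set b)" "length b = n" "hd b = v"
    using basis_completion[OF v v0] unfolding b_def by auto
  have ws: "corthogonal ws" "set ws \<subseteq> carrier_vec n" "length ws = n"
    using gram_schmidt_result[OF b(1-3) ws_def] b(4) by auto
  have n: "n > 0" using v0 v by (metis carrier_vecD neq0_conv vec_of_dim_0)
  obtain vs where bv: "b = v # vs" using b(4,5) n by (cases b) auto
  have hws: "hd ws = v" unfolding ws_def bv using gram_schmidt_hd[OF v] .
  define us where "us = map (\<lambda>w. (1 / sqrt (w \<bullet> w)) \<cdot>\<^sub>v w) ws"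
  have wsc: "ws ! i \<in> carrier_vec n" if "i < n" for i using ws that by auto
  have orth: "ws ! i \<bullet> ws ! j = 0 \<longleftrightarrow> i \<noteq> j" if "i < n" "j < n" for i j
    using corthogonalD[OF ws(1), of i j] that ws(3) by (simp add: vec_conjugate_real)
  have pos: "ws ! i \<bullet> ws ! i > 0" if "i < n" for i
  proof -
    have "0 \<le> ws ! i \<bullet>c ws ! i" by (rule conjugate_square_ge_0_vec)
    thus ?thesis using orth[OF that that] by (simp add: vec_conjugate_real)
  qed
  have "us ! i \<bullet> us ! j = (if i = j then 1 else 0)" if "i < n" "j < n" for i j
  proof -
    have "us ! i \<bullet> us ! j = (1 / sqrt (ws!i \<bullet> ws!i)) * (1 / sqrt (ws!j \<bullet> ws!j)) * (ws!i \<bullet> ws!j)"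
      unfolding us_def using that ws(3) wsc[OF that(1)] wsc[OF that(2)]
      by (simp add: smult_scalar_prod_distrib scalar_prod_smult_distrib)
    thus ?thesis using orth[OF that] pos[OF that(1)]
      by (auto simp: real_sqrt_mult[symmetric])
  qed
  moreover have "hd us = v" unfolding us_def using hws ws(3) n v1 by (cases ws) auto
  moreover have "length us = n" "set us \<subseteq> carrier_vec n" unfolding us_def using ws by auto
  ultimately show ?thesis by blast
qed


lemma spectral:
  fixes A :: "real mat"
  assumes "A \<in> carrier_mat n n" "A\<^sup>T = A"
  shows "\<exists>P D. P \<in> carrier_mat n n \<and> D \<in> carrier_mat n n \<and> diagonal_mat D \<and>
    P\<^sup>T * P = 1\<^sub>m n \<and> P * P\<^sup>T = 1\<^sub>m n \<and> A = P * D * P\<^sup>T"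
  using assms
proof (induction n arbitrary: A)
  case 0
  hence "A = 1\<^sub>m 0 * A * (1\<^sub>m 0)\<^sup>T" by auto
  moreover have "diagonal_mat A" using 0 unfolding diagonal_mat_def by auto
  ultimately show ?case using 0 by (intro exI[of _ "1\<^sub>m 0"] exI[of _ A]) auto
next
  case (Suc m)
  define n where "n = Suc m"
  have A: "A \<in> carrier_mat n n" and sym: "A\<^sup>T = A" using Suc n_def by auto
  obtain e v0 where v0: "v0 \<in> carrier_vec n" "v0 \<noteq> 0\<^sub>v n" "A *\<^sub>v v0 = e \<cdot>\<^sub>v v0"
    using real_sym_eigen[OF A _ sym] n_def by auto
  have "0 \<le> v0 \<bullet>c v0" by (rule conjugate_square_ge_0_vec)
  moreover have "v0 \<bullet>c v0 \<noteq> 0" using v0 conjugate_square_eq_0_vec by blast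
  ultimately have pos: "v0 \<bullet> v0 > 0" by (simp add: vec_conjugate_real)
  define v where "v = (1 / sqrt (v0 \<bullet> v0)) \<cdot>\<^sub>v v0"
  have v: "v \<in> carrier_vec n" unfolding v_def using v0 by auto
  have v1: "v \<bullet> v = 1" unfolding v_def using v0 pos
    by (simp add: smult_scalar_prod_distrib scalar_prod_smult_distrib real_sqrt_mult[symmetric])
  have ev: "A *\<^sub>v v = e \<cdot>\<^sub>v v" unfolding v_def using v0 A
    by (simp add: mult_mat_vec smult_smult_assoc mult.commute)
  obtain us where us: "length us = n" "set us \<subseteq> carrier_vec n" "hd us = v"
    "\<And>i j. i < n \<Longrightarrow> j < n \<Longrightarrow> us ! i \<bullet> us ! j = (if i = j then 1 else 0)"
    using orthonormal_extend[OF v v1] by blast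
  have usc: "us ! i \<in> carrier_vec n" if "i < n" for i using us that by auto
  have us0: "us ! 0 = v" using us(1,3) n_def by (cases us) auto
  define W where "W = mat_of_cols n us"
  have W: "W \<in> carrier_mat n n" unfolding W_def using us by auto
  have colW: "col W j = us ! j" if "j < n" for j unfolding W_def
    using col_mat_of_cols[of j us n] that us usc by auto
  have WtW: "W\<^sup>T * W = 1\<^sub>m n"
  proof (rule eq_matI)
    fix i j assume "i < dim_row (1\<^sub>m n)" "j < dim_col (1\<^sub>m n)"
    hence ij: "i < n" "j < n" by auto
    thus "(W\<^sup>T * W) $$ (i, j) = 1\<^sub>m n $$ (i, j)"
      using W by (simp add: index_mult_mat row_transpose colW us(4))
  qed (use W in auto)
  have WWt: "W * W\<^sup>T = 1\<^sub>m n" using mat_mult_left_right_inverse[OF _ W WtW] W by auto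
  define A' where "A' = W\<^sup>T * A * W"
  have A': "A' \<in> carrier_mat n n" unfolding A'_def using W A by auto
  have A'ij: "A' $$ (i,j) = us ! i \<bullet> (A *\<^sub>v us ! j)" if "i < n" "j < n" for i j
  proof -
    have "A' = W\<^sup>T * (A * W)" unfolding A'_def using W A by (metis assoc_mult_mat transpose_carrier_mat)
    hence "A' $$ (i,j) = row W\<^sup>T i \<bullet> col (A * W) j" using that W A by (simp add: index_mult_mat)
    also have "row W\<^sup>T i = us ! i" using that W by (simp add: row_transpose colW)
    also have "col (A * W) j = A *\<^sub>v us ! j" using col_mult2[OF A W that(2)] colW that by simp

    finally show ?thesis .
  qed
  have A'sym: "A' $$ (i,j) = A' $$ (j,i)" if "i < n" "j < n" for i j
  proof -
    have "us ! i \<bullet> (A *\<^sub>v us ! j) = (A\<^sup>T *\<^sub>v us ! i) \<bullet> us ! j"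
      using transpose_vec_mult_scalar[OF A usc[OF that(2)] usc[OF that(1)]] by simp
    also have "\<dots> = us ! j \<bullet> (A *\<^sub>v us ! i)" unfolding sym
      by (rule comm_scalar_prod[of _ n]) (use A usc that in auto)
    finally show ?thesis using A'ij that by simp
  qed
  have A'col0: "A' $$ (i,0) = (if i = 0 then e else 0)" if "i < n" for i
    using that A'ij[of i 0] n_def us(4)[of i 0] usc[OF that] v by (simp add: us0 ev)
  define A3 where "A3 = mat m m (\<lambda>(i,j). A' $$ (Suc i, Suc j))"
  have A3: "A3 \<in> carrier_mat m m" unfolding A3_def by auto
  have A3sym: "A3\<^sup>T = A3" unfolding A3_def
    by (rule eq_matI) (auto simp: A'sym n_def)
  obtain P3 D3 where PD3: "P3 \<in> carrier_mat m m" "D3 \<in> carrier_mat m m" "diagonal_mat D3"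
    "P3\<^sup>T * P3 = 1\<^sub>m m" "P3 * P3\<^sup>T = 1\<^sub>m m" "A3 = P3 * D3 * P3\<^sup>T"
    using Suc.IH[OF A3 A3sym] by blast
  define E1 where "E1 = mat 1 1 (\<lambda>_. e)"
  have E1: "E1 \<in> carrier_mat 1 1" unfolding E1_def by auto
  have A'blk: "A' = four_block_mat E1 (0\<^sub>m 1 m) (0\<^sub>m m 1) A3"
  proof (rule eq_matI)
    fix i j assume ij: "i < dim_row (four_block_mat E1 (0\<^sub>m 1 m) (0\<^sub>m m 1) A3)"
      "j < dim_col (four_block_mat E1 (0\<^sub>m 1 m) (0\<^sub>m m 1) A3)"
    hence ij': "i < n" "j < n" using E1 A3 n_def by auto
    show "A' $$ (i, j) = four_block_mat E1 (0\<^sub>m 1 m) (0\<^sub>m m 1) A3 $$ (i, j)"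
    proof (cases "i = 0 \<or> j = 0")
      case True
      thus ?thesis using ij ij' A'col0[of i] A'col0[of j] A'sym[of i j] E1 A3
        by (auto simp: E1_def)
    next
      case False
      then obtain i' j' where "i = Suc i'" "j = Suc j'" by (metis not0_implies_Suc)
      thus ?thesis using ij ij' E1 A3 n_def by (auto simp: A3_def)
    qed
  qed (use A' E1 A3 n_def in auto)
  define B where "B = four_block_mat (1\<^sub>m 1) (0\<^sub>m 1 m) (0\<^sub>m m 1) P3"
  define D where "D = four_block_mat E1 (0\<^sub>m 1 m) (0\<^sub>m m 1) D3"
  have B: "B \<in> carrier_mat n n" unfolding B_def n_def using PD3 by auto
  have D: "D \<in> carrier_mat n n" unfolding D_def n_def using PD3 E1 by auto
  have Bt: "B\<^sup>T = four_block_mat (1\<^sub>m 1) (0\<^sub>m 1 m) (0\<^sub>m m 1) P3\<^sup>T"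
    unfolding B_def using PD3 by (subst transpose_four_block_mat) auto
  have BtB: "B\<^sup>T * B = 1\<^sub>m n" unfolding Bt unfolding B_def using PD3 n_def
    by (subst mult_four_block_mat[of _ 1 1 _ m _ m _ _ 1 _ m]) auto
  have BBt: "B * B\<^sup>T = 1\<^sub>m n" unfolding Bt unfolding B_def using PD3 n_def
    by (subst mult_four_block_mat[of _ 1 1 _ m _ m _ _ 1 _ m]) auto
  have BD: "B * D = four_block_mat E1 (0\<^sub>m 1 m) (0\<^sub>m m 1) (P3 * D3)" unfolding B_def D_def
    using PD3 E1 by (subst mult_four_block_mat[of _ 1 1 _ m _ m _ _ 1 _ m]) auto
  have BDB: "B * D * B\<^sup>T = A'" unfolding BD Bt A'blk PD3(6) using PD3 E1
    by (subst mult_four_block_mat[of _ 1 1 _ m _ m _ _ 1 _ m]) auto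
  have "diagonal_mat D" unfolding diagonal_mat_def
  proof (intro allI impI)
    fix i j assume ij: "i < dim_row D" "j < dim_col D" "i \<noteq> j"
    show "D $$ (i, j) = 0"
    proof (cases "i = 0 \<or> j = 0")
      case True thus ?thesis using ij PD3 E1 unfolding D_def by auto
    next
      case False
      then obtain i' j' where "i = Suc i'" "j = Suc j'" by (metis not0_implies_Suc)
      thus ?thesis using ij PD3 E1 unfolding D_def diagonal_mat_def by auto
    qed
  qed
  define P where "P = W * B"
  have P: "P \<in> carrier_mat n n" unfolding P_def using W B by auto
  have Pt: "P\<^sup>T = B\<^sup>T * W\<^sup>T" unfolding P_def using W B by (simp add: transpose_mult)
  have "P\<^sup>T * P = (B\<^sup>T * W\<^sup>T) * (W * B)" using Pt P_def by simp
  also have "\<dots> = B\<^sup>T * (W\<^sup>T * W) * B" using W B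
    by (simp add: assoc_mult_mat[of _ n n _ n _ n])
  finally have "P\<^sup>T * P = B\<^sup>T * (W\<^sup>T * W) * B" .
  hence PtP: "P\<^sup>T * P = 1\<^sub>m n" using WtW BtB B by simp
  have "P * P\<^sup>T = (W * B) * (B\<^sup>T * W\<^sup>T)" using Pt P_def by simp
  also have "\<dots> = W * (B * B\<^sup>T) * W\<^sup>T" using W B
    by (simp add: assoc_mult_mat[of _ n n _ n _ n])
  finally have "P * P\<^sup>T = W * (B * B\<^sup>T) * W\<^sup>T" .
  hence PPt: "P * P\<^sup>T = 1\<^sub>m n" using WWt BBt W by simp
  have "P * D * P\<^sup>T = (W * B) * D * (B\<^sup>T * W\<^sup>T)" using Pt P_def by simp
  also have "\<dots> = W * (B * D * B\<^sup>T) * W\<^sup>T" using W B D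
    by (simp add: assoc_mult_mat[of _ n n _ n _ n])
  also have "\<dots> = (W * W\<^sup>T) * A * (W * W\<^sup>T)" unfolding BDB A'_def using W A
    by (simp add: assoc_mult_mat[of _ n n _ n _ n])
  also have "\<dots> = A" using WWt A by simp
  finally show ?case using P D \<open>diagonal_mat D\<close> PtP PPt n_def by metis
qed


lemma lin_prod_mset:
  fixes xs ys :: "'b :: idom list"
  assumes "(\<Prod>x\<leftarrow>xs. [:- x, 1:]) = (\<Prod>x\<leftarrow>ys. [:- x, 1:])"
  shows "mset xs = mset ys"
  using assms
proof (induction xs arbitrary: ys)
  case Nil
  have "length ys = 0" using degree_linear_factors[of uminus ys] Nil by simp
  thus ?case by simp
next
  case (Cons a xs)
  have "poly (\<Prod>x\<leftarrow>ys. [:- x, 1:]) a = 0" unfolding Cons(2)[symmetric] by simp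
  hence a: "a \<in> set ys" unfolding poly_prod_list prod_list_zero_iff by auto
  have "[:- a, 1:] * (\<Prod>x\<leftarrow>xs. [:- x, 1:]) = [:- a, 1:] * (\<Prod>x\<leftarrow>remove1 a ys. [:- x, 1:])"
    using Cons(2) prod_list_map_remove1[OF a, of "\<lambda>x. [:- x, 1:]"] by simp
  moreover have ne: "[:- a, 1:] \<noteq> 0" by simp
  ultimately have "(\<Prod>x\<leftarrow>xs. [:- x, 1:]) = (\<Prod>x\<leftarrow>remove1 a ys. [:- x, 1:])"
    by (metis mult_left_cancel)
  from Cons(1)[OF this] a show ?case by simp
qed

lemma lambda2_bound:
  fixes A :: "real mat" and es :: "real list"
  assumes A: "A \<in> carrier_mat n n" "A\<^sup>T = A" and n2: "n \<ge> 2"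
    and es: "sorted es" "char_poly A = (\<Prod>x\<leftarrow>es. [:- x, 1:])"
    and g: "g1 \<in> carrier_vec n" "g2 \<in> carrier_vec n"
    and indep: "\<And>a b. a \<cdot>\<^sub>v g1 + b \<cdot>\<^sub>v g2 = 0\<^sub>v n \<Longrightarrow> a = 0 \<and> b = 0"
    and quad: "\<And>a b. (a \<cdot>\<^sub>v g1 + b \<cdot>\<^sub>v g2) \<bullet> (A *\<^sub>v (a \<cdot>\<^sub>v g1 + b \<cdot>\<^sub>v g2))
                  \<le> k * ((a \<cdot>\<^sub>v g1 + b \<cdot>\<^sub>v g2) \<bullet> (a \<cdot>\<^sub>v g1 + b \<cdot>\<^sub>v g2))"
  shows "es ! 1 \<le> k"
proof (rule ccontr)
  assume "\<not> es ! 1 \<le> k"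
  hence ek: "es ! 1 > k" by simp
  obtain P D where PD: "P \<in> carrier_mat n n" "D \<in> carrier_mat n n" "diagonal_mat D"
    "P\<^sup>T * P = 1\<^sub>m n" "P * P\<^sup>T = 1\<^sub>m n" "A = P * D * P\<^sup>T"
    using spectral[OF A] by blast
  have "similar_mat_wit A D P P\<^sup>T" unfolding similar_mat_wit_def Let_def using PD A by auto
  hence "char_poly A = char_poly D" by (intro char_poly_similar) (auto simp: similar_mat_def)
  also have "upper_triangular D" using PD(2,3) unfolding diagonal_mat_def upper_triangular_def by auto
  hence "char_poly D = (\<Prod>x\<leftarrow>diag_mat D. [:- x, 1:])" using char_poly_upper_triangular[OF PD(2)] by simp
  finally have mset: "mset es = mset (diag_mat D)" using lin_prod_mset es(2) by metis
  have len: "length (diag_mat D) = n" using PD(2) unfolding diag_mat_def by auto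
  have dD: "diag_mat D ! j = D $$ (j,j)" if "j < n" for j using PD(2) that unfolding diag_mat_def by auto
  have lenes: "length es = n" using mset len by (metis size_mset)
  obtain a0 b0 rest where es_eq: "es = a0 # b0 # rest" using lenes n2
    by (metis One_nat_def Suc_1 Suc_le_length_iff le_imp_less_Suc less_imp_le_nat)
  have "b0 > k" using ek es_eq by simp
  moreover have "\<forall>x\<in>set rest. b0 \<le> x" using es(1) es_eq by simp
  ultimately have "filter (\<lambda>x. x \<le> k) (b0 # rest) = []" by (auto simp: filter_empty_conv)
  hence "length (filter (\<lambda>x. x \<le> k) es) \<le> 1" using es_eq by simp
  also have "length (filter (\<lambda>x. x \<le> k) es) = length (filter (\<lambda>x. x \<le> k) (diag_mat D))"
    by (metis mset mset_filter size_mset)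
  also have "\<dots> = card {j. j < n \<and> D $$ (j,j) \<le> k}" unfolding length_filter_conv_card len
    using dD by (metis (lifting))
  finally have card1: "card {j. j < n \<and> D $$ (j,j) \<le> k} \<le> 1" .
  obtain j0 where j0: "j0 < n" "\<And>j. j < n \<Longrightarrow> j \<noteq> j0 \<Longrightarrow> D $$ (j,j) > k"
  proof (cases "\<exists>j<n. D $$ (j,j) \<le> k")
    case True
    then obtain j1 where j1: "j1 < n" "D $$ (j1,j1) \<le> k" by auto
    show ?thesis
    proof (rule that[OF j1(1)])
      fix j assume j: "j < n" "j \<noteq> j1"
      show "D $$ (j,j) > k"
      proof (rule ccontr)
        assume "\<not> D $$ (j,j) > k"
        hence "{j, j1} \<subseteq> {j. j < n \<and> D $$ (j,j) \<le> k}" using j j1 by auto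
        from card_mono[OF _ this] have "card {j, j1} \<le> 1" using card1 by auto
        thus False using j by auto
      qed
    qed
  next
    case False
    thus ?thesis using that[of 0] n2 by fastforce
  qed
  define c1 where "c1 = P\<^sup>T *\<^sub>v g1"
  define c2 where "c2 = P\<^sup>T *\<^sub>v g2"
  obtain a b where ab: "\<not> (a = 0 \<and> b = 0)" "a * c1 $ j0 + b * c2 $ j0 = 0"
  proof (cases "c2 $ j0 = 0 \<and> c1 $ j0 = 0")
    case True thus ?thesis using that[of 1 0] by auto
  next
    case False thus ?thesis using that[of "c2 $ j0" "- c1 $ j0"] by (auto simp: mult.commute)
  qed
  define gg where "gg = a \<cdot>\<^sub>v g1 + b \<cdot>\<^sub>v g2"
  have gg: "gg \<in> carrier_vec n" unfolding gg_def using g by auto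
  have gg0: "gg \<noteq> 0\<^sub>v n" using indep ab(1) unfolding gg_def by blast
  define c where "c = P\<^sup>T *\<^sub>v gg"
  have c: "c \<in> carrier_vec n" unfolding c_def using PD gg by auto
  have cj0: "c $ j0 = 0"
  proof -
    have "c = a \<cdot>\<^sub>v c1 + b \<cdot>\<^sub>v c2" unfolding c_def gg_def c1_def c2_def using PD(1) g
      by (simp add: mult_add_distrib_mat_vec[of _ n n] mult_mat_vec[of _ n n])
    thus ?thesis using ab(2) j0(1) PD(1) unfolding c1_def c2_def by simp
  qed
  have ggPc: "gg = P *\<^sub>v c" unfolding c_def using PD gg
    by (metis assoc_mult_mat_vec one_mult_mat_vec transpose_carrier_mat)
  have c0: "c \<noteq> 0\<^sub>v n" using ggPc gg0 PD(1) by auto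
  have Agg: "A *\<^sub>v gg = P *\<^sub>v (D *\<^sub>v c)" unfolding PD(6) c_def using PD gg
    by (metis assoc_mult_mat_vec mult_carrier_mat transpose_carrier_mat mult_mat_vec_carrier)
  have q1: "gg \<bullet> (A *\<^sub>v gg) = c \<bullet> (D *\<^sub>v c)" unfolding Agg c_def
    using transpose_vec_mult_scalar[of P n n "D *\<^sub>v (P\<^sup>T *\<^sub>v gg)" gg] PD gg by auto
  have q2: "gg \<bullet> gg = c \<bullet> c" using transpose_vec_mult_scalar[of P n n c gg] PD gg c ggPc
    unfolding c_def by auto
  have Dc: "(D *\<^sub>v c) $ j = D $$ (j,j) * c $ j" if "j < n" for j
  proof -
    have "(D *\<^sub>v c) $ j = (\<Sum>i = 0..<n. D $$ (j,i) * c $ i)"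
      using PD(2) c that by (simp add: scalar_prod_def)
    also have "\<dots> = (\<Sum>i = 0..<n. if i = j then D $$ (j,j) * c $ j else 0)"
      by (rule sum.cong) (use PD(2,3) that in \<open>auto simp: diagonal_mat_def\<close>)
    also have "\<dots> = D $$ (j,j) * c $ j" using that by simp
    finally show ?thesis .
  qed
  have qD: "c \<bullet> (D *\<^sub>v c) = (\<Sum>j = 0..<n. D $$ (j,j) * (c $ j)\<^sup>2)"
    using c PD(2) Dc by (auto simp: scalar_prod_def power2_eq_square mult_ac intro!: sum.cong)
  have qc: "c \<bullet> c = (\<Sum>j = 0..<n. (c $ j)\<^sup>2)"
    using c by (auto simp: scalar_prod_def power2_eq_square)
  obtain j1 where j1: "j1 < n" "c $ j1 \<noteq> 0" using c0 c by (metis eq_vecI carrier_vecD index_zero_vec)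
  have "j1 \<noteq> j0" using j1 cj0 by auto
  have pos: "(\<Sum>j = 0..<n. (D $$ (j,j) - k) * (c $ j)\<^sup>2) > 0"
  proof (rule sum_pos2[of _ j1])
    show "0 < (D $$ (j1,j1) - k) * (c $ j1)\<^sup>2" using j0(2)[OF j1(1) \<open>j1 \<noteq> j0\<close>] j1(2) by simp
    show "\<And>i. i \<in> {0..<n} \<Longrightarrow> 0 \<le> (D $$ (i,i) - k) * (c $ i)\<^sup>2"
    proof -
      fix i assume "i \<in> {0..<n}"
      thus "0 \<le> (D $$ (i,i) - k) * (c $ i)\<^sup>2" using j0(2)[of i] cj0
        by (cases "i = j0") (auto intro!: mult_nonneg_nonneg)
    qed
  qed (use j1 in auto)
  have "(\<Sum>j = 0..<n. (D $$ (j,j) - k) * (c $ j)\<^sup>2) = c \<bullet> (D *\<^sub>v c) - k * (c \<bullet> c)"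
    unfolding qD qc by (simp add: algebra_simps sum_subtractf sum_distrib_left)
  also have "\<dots> = gg \<bullet> (A *\<^sub>v gg) - k * (gg \<bullet> gg)" using q1 q2 by simp
  also have "\<dots> \<le> 0" using quad[of a b] unfolding gg_def by simp
  finally show False using pos by simp
qed



lemma conj_perm:
  assumes f: "bij_betw f A B" and ff: "\<And>x. x \<in> A \<Longrightarrow> f' (f x) = x" and p: "p permutes A"
    and fin: "finite A"
  shows "(\<lambda>x. if x \<in> B then f (p (f' x)) else x) permutes B"
    "sign (\<lambda>x. if x \<in> B then f (p (f' x)) else x) = sign p"
proof -
  interpret permutes_bij_finite p A B f f' "\<lambda>x. if x \<in> B then f (p (f' x)) else x"
    by unfold_locales (use assms in auto)
  show "(\<lambda>x. if x \<in> B then f (p (f' x)) else x) permutes B" using permutes_p' by simp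
  show "sign (\<lambda>x. if x \<in> B then f (p (f' x)) else x) = sign p" using sign_p' by simp
qed

lemma char_poly_on_transport:
  fixes M :: "'a \<Rightarrow> 'a \<Rightarrow> real"
  assumes xs: "distinct xs" "set xs = V"
  shows "char_poly_on V M = char_poly (mat (length xs) (length xs) (\<lambda>(i,j). M (xs!i) (xs!j)))"
proof -
  define n where "n = length xs"
  define f where "f = (\<lambda>i. xs ! i)"
  define g where "g = inv_into {0..<n} f"
  have bf: "bij_betw f {0..<n} V" unfolding f_def n_def using bij_betw_nth[OF xs(1), of "{..<length xs}" V] xs(2)
    by (simp add: atLeast0LessThan)
  have gf: "g (f i) = i" if "i < n" for i unfolding g_def using bf that
    by (simp add: bij_betw_def inv_into_f_f)
  have fg: "f (g a) = a" if "a \<in> V" for a unfolding g_def using bf that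
    by (simp add: bij_betw_def f_inv_into_f)
  have gV: "g a < n" if "a \<in> V" for a unfolding g_def using bf that
    by (metis atLeastLessThan_iff bij_betw_def inv_into_into)
  have bg: "bij_betw g V {0..<n}" using bf unfolding g_def by (simp add: bij_betw_inv_into)
  have fV: "f i \<in> V" if "i < n" for i using that bf by (auto simp: bij_betw_def)
  have finj: "f i = f j \<longleftrightarrow> i = j" if "i < n" "j < n" for i j
    using that bf by (auto simp: bij_betw_def inj_on_def)
  define T where "T = (\<lambda>a b. if b = a then [:- M a a, 1:] else [:- M a b:])"
  define AM where "AM = mat n n (\<lambda>(i,j). M (xs!i) (xs!j))"
  define Phi where "Phi = (\<lambda>q x. if x \<in> V then f (q (g x)) else x)"
  define Psi where "Psi = (\<lambda>p i. if i \<in> {0..<n} then g (p (f i)) else i)"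
  have CPM: "char_poly_matrix AM $$ (i, j) = T (f i) (f j)" if "i < n" "j < n" for i j
    using that finj[OF that] unfolding AM_def char_poly_matrix_def T_def f_def
    by (auto simp: one_pCons)
  have "char_poly AM = (\<Sum>q\<in>{q. q permutes {0..<n}}. signof q * (\<Prod>i = 0..<n. char_poly_matrix AM $$ (i, q i)))"
    unfolding char_poly_def det_def AM_def char_poly_matrix_def by simp
  also have "\<dots> = (\<Sum>q\<in>{q. q permutes {0..<n}}. Polynomial.smult (of_int (sign (Phi q))) (\<Prod>a\<in>V. T a (Phi q a)))"
  proof (rule sum.cong[OF refl])
    fix q assume "q \<in> {q. q permutes {0..<n}}"
    hence q: "q permutes {0..<n}" by simp
    have qn: "q i < n" if "i < n" for i using q that permutes_in_image by fastforce
    have sg: "sign (Phi q) = sign q" unfolding Phi_def using conj_perm(2)[OF bf _ q] gf by auto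
    have "(\<Prod>i = 0..<n. char_poly_matrix AM $$ (i, q i)) = (\<Prod>i = 0..<n. T (f i) (Phi q (f i)))"
      by (rule prod.cong[OF refl]) (auto simp: CPM qn Phi_def gf fV)
    also have "\<dots> = (\<Prod>a\<in>V. T a (Phi q a))"
      using prod.reindex_bij_betw[OF bf, of "\<lambda>a. T a (Phi q a)"] by simp
    finally show "signof q * (\<Prod>i = 0..<n. char_poly_matrix AM $$ (i, q i)) =
       Polynomial.smult (of_int (sign (Phi q))) (\<Prod>a\<in>V. T a (Phi q a))"
      unfolding sg by (simp add: of_int_poly)
  qed
  also have "\<dots> = (\<Sum>p\<in>{p. p permutes V}. Polynomial.smult (of_int (sign p)) (\<Prod>a\<in>V. T a (p a)))"
  proof -
    have bij: "bij_betw Phi {q. q permutes {0..<n}} {p. p permutes V}"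
    proof (rule bij_betw_byWitness[of _ Psi])
      show "\<forall>q\<in>{q. q permutes {0..<n}}. Psi (Phi q) = q"
      proof
        fix q assume "q \<in> {q. q permutes {0..<n}}"
        hence q: "q permutes {0..<n}" by simp
        have qn: "q i < n" if "i < n" for i using q that permutes_in_image by fastforce
        show "Psi (Phi q) = q"
        proof
          fix i show "Psi (Phi q) i = q i"
            using qn[of i] permutes_not_in[OF q, of i] by (auto simp: Psi_def Phi_def fV gf)
        qed
      qed
      show "\<forall>p\<in>{p. p permutes V}. Phi (Psi p) = p"
      proof
        fix p assume "p \<in> {p. p permutes V}"
        hence p: "p permutes V" by simp
        have pV: "p a \<in> V" if "a \<in> V" for a using p that permutes_in_image by fastforce
        show "Phi (Psi p) = p"
        proof
          fix a show "Phi (Psi p) a = p a"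
            using pV[of a] permutes_not_in[OF p, of a] by (auto simp: Psi_def Phi_def gV fg)
        qed
      qed
      show "Phi ` {q. q permutes {0..<n}} \<subseteq> {p. p permutes V}"
        using conj_perm(1)[OF bf] gf unfolding Phi_def by auto
      show "Psi ` {p. p permutes V} \<subseteq> {q. q permutes {0..<n}}"
        using conj_perm(1)[OF bg] fg fV unfolding Psi_def using xs(2) by auto
    qed
    show ?thesis using sum.reindex_bij_betw[OF bij, of "\<lambda>p. Polynomial.smult (of_int (sign p)) (\<Prod>a\<in>V. T a (p a))"]
      by simp
  qed
  finally have X: "char_poly AM = (\<Sum>p\<in>{p. p permutes V}. Polynomial.smult (of_int (sign p)) (\<Prod>a\<in>V. T a (p a)))" .
  have "char_poly_on V M = (\<Sum>p\<in>{p. p permutes V}. Polynomial.smult (of_int (sign p)) (\<Prod>a\<in>V. T a (p a)))"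
    unfolding char_poly_on_def T_def by (rule refl)
  thus ?thesis using X unfolding AM_def n_def by simp
qed


lemma adjacent_sym: "adjacent E a b = adjacent E b a"
  unfolding adjacent_def by auto

lemma reach_closed:
  assumes "(u,v) \<in> reach_rel V' E'" "u \<in> Y"
    and closed: "\<And>a b. a \<in> Y \<Longrightarrow> b \<in> V' \<Longrightarrow> adjacent E' a b \<Longrightarrow> b \<in> Y"
  shows "v \<in> Y"
proof -
  have "(u,v) \<in> ({(i, j). i \<in> V' \<and> j \<in> V' \<and> adjacent E' i j})\<^sup>*"
    using assms(1) unfolding reach_rel_def by auto
  thus ?thesis
  proof (induction rule: rtrancl_induct)
    case base thus ?case using assms(2) .
  next
    case (step y z) thus ?case using closed by auto
  qed
qed

lemma reach_equiv: "equiv V' (reach_rel V' E')"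
proof (rule equivI)
  let ?R = "{(i, j). i \<in> V' \<and> j \<in> V' \<and> adjacent E' i j}"
  show "refl_on V' (reach_rel V' E')" unfolding reach_rel_def refl_on_def by auto
  have "sym ?R" unfolding sym_def adjacent_def by auto
  hence "sym (?R\<^sup>*)" by (rule sym_rtrancl)
  thus "sym (reach_rel V' E')" unfolding reach_rel_def sym_def by auto
  show "trans (reach_rel V' E')" unfolding reach_rel_def trans_def
    by (auto intro: rtrancl_trans)
  show "reach_rel V' E' \<subseteq> V' \<times> V'" unfolding reach_rel_def by auto
qed

lemma two_components_iff:
  assumes "finite V'"
  shows "num_components V' E' \<ge> 2 \<longleftrightarrow> (\<exists>u\<in>V'. \<exists>v\<in>V'. (u,v) \<notin> reach_rel V' E')"
proof
  let ?r = "reach_rel V' E'"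
  have eq: "equiv V' ?r" by (rule reach_equiv)
  have fin: "finite (V' // ?r)" using assms
    by (intro finite_quotient) (auto simp: reach_rel_def)
  {
    assume "num_components V' E' \<ge> 2"
    hence "card (V' // ?r) \<ge> 2" unfolding num_components_def .
    hence "\<not> (\<forall>x\<in>V' // ?r. \<forall>y\<in>V' // ?r. x = y)" using card_le_Suc0_iff_eq[OF fin] by auto
    then obtain X1 X2 where X: "X1 \<in> V' // ?r" "X2 \<in> V' // ?r" "X1 \<noteq> X2" by auto
    then obtain u v where uv: "u \<in> V'" "v \<in> V'" "X1 = ?r `` {u}" "X2 = ?r `` {v}"
      by (auto elim!: quotientE)
    hence "(u,v) \<notin> ?r" using eq_equiv_class_iff[OF eq uv(1,2)] X(3) by auto
    thus "\<exists>u\<in>V'. \<exists>v\<in>V'. (u,v) \<notin> ?r" using uv by auto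
  }
  {
    assume "\<exists>u\<in>V'. \<exists>v\<in>V'. (u,v) \<notin> ?r"
    then obtain u v where uv: "u \<in> V'" "v \<in> V'" "(u,v) \<notin> ?r" by auto
    hence ne: "?r `` {u} \<noteq> ?r `` {v}" using eq_equiv_class_iff[OF eq uv(1,2)] by auto
    have "{?r `` {u}, ?r `` {v}} \<subseteq> V' // ?r" using uv by (auto intro: quotientI)
    from card_mono[OF fin this] ne have "card (V' // ?r) \<ge> 2" by auto
    thus "num_components V' E' \<ge> 2" unfolding num_components_def .
  }
qed

definition QV :: "'a set \<Rightarrow> 'a set set \<Rightarrow> ('a \<Rightarrow> real) \<Rightarrow> real" where
  "QV V E h = (\<Sum>a\<in>V. h a * (\<Sum>b\<in>V. laplacian E a b * h b))"

definition Qe :: "'a set \<Rightarrow> ('a \<Rightarrow> real) \<Rightarrow> real" where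
  "Qe e h = (\<Sum>a\<in>e. \<Sum>b\<in>e. h a * h b * (if a = b then 1 else - 1 / (real (card e) - 1)))"

lemma laplacian_sum:
  assumes fin: "finite E"
  shows "laplacian E a b = (\<Sum>e\<in>E. if a \<in> e \<and> b \<in> e then (if a = b then 1 else - 1 / (real (card e) - 1)) else 0)"
proof (cases "a = b")
  case True
  have "real (degree E a) = (\<Sum>e\<in>E. if a \<in> e then 1 else 0)"
    unfolding degree_def using fin by (simp add: sum.If_cases Int_def conj_commute)
  moreover have "(\<Sum>e\<in>E. if a \<in> e \<and> b \<in> e then (if a = b then 1 else - 1 / (real (card e) - 1)) else 0)
     = (\<Sum>e\<in>E. if a \<in> e then 1 else 0)" using True by (intro sum.cong) auto
  ultimately show ?thesis using True unfolding laplacian_def by simp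
next
  case False
  have "(\<Sum>e\<in>E. if a \<in> e \<and> b \<in> e then (if a = b then 1 else - 1 / (real (card e) - 1)) else 0)
      = (\<Sum>e\<in>E. if a \<in> e \<and> b \<in> e then - 1 / (real (card e) - 1) else 0)"
    using False by (intro sum.cong) auto
  also have "\<dots> = - (\<Sum>e\<in>{e\<in>E. a \<in> e \<and> b \<in> e}. 1 / (real (card e) - 1))"
    using fin by (simp add: sum.If_cases sum_negf Int_def conj_commute)
  finally show ?thesis using False unfolding laplacian_def by simp
qed

lemma QV_decomp:
  assumes hg: "hypergraph V E"
  shows "QV V E h = (\<Sum>e\<in>E. Qe e h)"
proof -
  have finV: "finite V" and EV: "\<And>e. e \<in> E \<Longrightarrow> e \<subseteq> V" using hg unfolding hypergraph_def by auto
  have finE: "finite E" using finV EV by (meson Pow_iff finite_Pow_iff rev_finite_subset subsetI)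
  define l :: "'a set \<Rightarrow> 'a \<Rightarrow> 'a \<Rightarrow> real" where "l = (\<lambda>e a b. if a \<in> e \<and> b \<in> e then (if a = b then 1 else - 1 / (real (card e) - 1)) else (0::real))"
  have "QV V E h = (\<Sum>a\<in>V. \<Sum>b\<in>V. \<Sum>e\<in>E. h a * h b * l e a b)"
    unfolding QV_def laplacian_sum[OF finE] l_def
    by (simp add: sum_distrib_left mult_ac)
  also have "\<dots> = (\<Sum>a\<in>V. \<Sum>e\<in>E. \<Sum>b\<in>V. h a * h b * l e a b)"
    by (rule sum.cong[OF refl], rule sum.swap)
  also have "\<dots> = (\<Sum>e\<in>E. \<Sum>a\<in>V. \<Sum>b\<in>V. h a * h b * l e a b)"
    by (rule sum.swap)
  also have "\<dots> = (\<Sum>e\<in>E. Qe e h)"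
  proof (rule sum.cong[OF refl])
    fix e assume e: "e \<in> E"
    have sub: "e \<subseteq> V" using EV[OF e] .
    have "(\<Sum>a\<in>V. \<Sum>b\<in>V. h a * h b * l e a b) = (\<Sum>a\<in>e. \<Sum>b\<in>V. h a * h b * l e a b)"
      by (rule sum.mono_neutral_right[OF finV sub]) (auto simp: l_def)
    also have "\<dots> = (\<Sum>a\<in>e. \<Sum>b\<in>e. h a * h b * l e a b)"
      by (rule sum.cong[OF refl], rule sum.mono_neutral_right[OF finV sub]) (auto simp: l_def)
    also have "\<dots> = Qe e h" unfolding Qe_def l_def
      by (intro sum.cong refl) auto
    finally show "(\<Sum>a\<in>V. \<Sum>b\<in>V. h a * h b * l e a b) = Qe e h" .
  qed
  finally show ?thesis .
qed

lemma Qe_two_valued: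
  assumes fin: "finite e" and m: "card e \<ge> 2"
    and h: "\<And>a. a \<in> e \<Longrightarrow> h a = (if a \<in> X then P else R)"
  shows "Qe e h = (P - R)\<^sup>2 * real (card (e \<inter> X)) * real (card e - card (e \<inter> X)) / (real (card e) - 1)"
proof -
  define m where "m = real (card e)"
  define x where "x = real (card (e \<inter> X))"
  define w where "w = 1 / (m - 1)"
  have m1: "m - 1 > 0" using m unfolding m_def by simp
  have xle: "card (e \<inter> X) \<le> card e" using fin by (simp add: card_mono)
  have cd: "card (e - X) = card e - card (e \<inter> X)"
    using fin by (metis Diff_Diff_Int card_Diff_subset_Int finite_Int inf_commute Int_lower1)
  have "Qe e h = (\<Sum>a\<in>e. (\<Sum>b\<in>e. (if a = b then (1 + w) * (h a * h b) else 0)) - w * (h a * (\<Sum>b\<in>e. h b)))"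
    unfolding Qe_def w_def m_def sum_distrib_left sum_subtractf[symmetric]
    by (intro sum.cong refl) (auto simp: algebra_simps)
  also have "\<dots> = (\<Sum>a\<in>e. (1 + w) * (h a)\<^sup>2 - w * (h a * (\<Sum>b\<in>e. h b)))"
    using fin by (intro sum.cong refl) (simp add: power2_eq_square)
  also have "\<dots> = (1 + w) * (\<Sum>a\<in>e. (h a)\<^sup>2) - w * (\<Sum>a\<in>e. h a)\<^sup>2"
    by (simp add: sum_subtractf sum_distrib_left sum_distrib_right power2_eq_square mult_ac)
  also have "(\<Sum>a\<in>e. (h a)\<^sup>2) = x * P\<^sup>2 + (m - x) * R\<^sup>2"
  proof -
    have "(\<Sum>a\<in>e. (h a)\<^sup>2) = (\<Sum>a\<in>e. if a \<in> X then P\<^sup>2 else R\<^sup>2)" by (intro sum.cong) (auto simp: h)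
    also have "\<dots> = x * P\<^sup>2 + real (card (e - X)) * R\<^sup>2" using fin unfolding x_def
      by (simp add: sum.If_cases Diff_eq)
    finally show ?thesis using cd xle unfolding m_def x_def by (simp add: of_nat_diff)
  qed
  also have "(\<Sum>a\<in>e. h a) = x * P + (m - x) * R"
  proof -
    have "(\<Sum>a\<in>e. h a) = (\<Sum>a\<in>e. if a \<in> X then P else R)" by (intro sum.cong) (auto simp: h)
    also have "\<dots> = x * P + real (card (e - X)) * R" using fin unfolding x_def
      by (simp add: sum.If_cases Diff_eq)
    finally show ?thesis using cd xle unfolding m_def x_def by (simp add: of_nat_diff)
  qed
  also have "(1 + w) * (x * P\<^sup>2 + (m - x) * R\<^sup>2) - w * (x * P + (m - x) * R)\<^sup>2
      = (P - R)\<^sup>2 * x * (m - x) / (m - 1)"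
  proof -
    have w1: "1 + w = m / (m - 1)" unfolding w_def using m1 by (simp add: field_simps)
    have num: "m * (x * P\<^sup>2 + (m - x) * R\<^sup>2) - (x * P + (m - x) * R)\<^sup>2 = (P - R)\<^sup>2 * x * (m - x)"
      by (simp add: power2_eq_square algebra_simps)
    have "(1 + w) * (x * P\<^sup>2 + (m - x) * R\<^sup>2) - w * (x * P + (m - x) * R)\<^sup>2
      = (m * (x * P\<^sup>2 + (m - x) * R\<^sup>2) - (x * P + (m - x) * R)\<^sup>2) / (m - 1)"
    proof -
      have gen: "m / (m - 1) * A - 1 / (m - 1) * B = (m * A - B) / (m - 1)" for A B
        by (simp add: diff_divide_distrib)
      show ?thesis unfolding w1 unfolding w_def by (rule gen)
    qed
    thus ?thesis using num by simp
  qed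
  finally show ?thesis using xle unfolding m_def x_def by (simp add: of_nat_diff)
qed


lemma adj_weak_del:
  assumes fin: "\<And>e. e \<in> E \<Longrightarrow> finite e"
  shows "adjacent (weak_del_E E S) a b \<longleftrightarrow> a \<noteq> b \<and> (\<exists>e\<in>E. a \<in> e \<and> b \<in> e \<and> a \<notin> S \<and> b \<notin> S)"
proof
  assume "adjacent (weak_del_E E S) a b"
  thus "a \<noteq> b \<and> (\<exists>e\<in>E. a \<in> e \<and> b \<in> e \<and> a \<notin> S \<and> b \<notin> S)"
    unfolding adjacent_def weak_del_E_def by auto
next
  assume "a \<noteq> b \<and> (\<exists>e\<in>E. a \<in> e \<and> b \<in> e \<and> a \<notin> S \<and> b \<notin> S)"
  then obtain e where e: "e \<in> E" "a \<in> e" "b \<in> e" "a \<notin> S" "b \<notin> S" "a \<noteq> b" by auto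
  have "{a, b} \<subseteq> e - S" using e by auto
  hence "card {a, b} \<le> card (e - S)" using fin[OF e(1)] by (intro card_mono) auto
  hence "card (e - S) \<ge> 2" using e(6) by simp
  hence "e - S \<in> weak_del_E E S" unfolding weak_del_E_def using e(1) by blast
  thus "adjacent (weak_del_E E S) a b" unfolding adjacent_def using e by blast
qed

lemma R_bound:
  fixes E :: "'a set set" and S X :: "'a set" and c :: nat
  assumes finE: "finite E" and fin: "\<And>e. e \<in> E \<Longrightarrow> finite e"
    and finS: "finite S" and finX: "finite X" and c2: "c \<ge> 2"
    and ce: "\<And>e. e \<in> E \<Longrightarrow> c \<le> card e"
    and cnt: "\<And>s. s \<in> S \<Longrightarrow> card {e\<in>E. s \<in> e \<and> e \<inter> X \<noteq> {}} \<le> c - 1"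
  shows "(\<Sum>e\<in>E. real (card (e \<inter> X)) * real (card (e \<inter> S)) / (real (card e) - 1))
           \<le> real (card S) * real (card X)"
proof -
  define g where "g = (\<lambda>e. real (card (e \<inter> X)) / (real (card e) - 1))"
  have cardS: "real (card (e \<inter> S)) = (\<Sum>s\<in>S. if s \<in> e then 1 else 0)" for e
    using finS by (simp add: sum.If_cases Int_def conj_commute)
  have "(\<Sum>e\<in>E. real (card (e \<inter> X)) * real (card (e \<inter> S)) / (real (card e) - 1))
      = (\<Sum>e\<in>E. \<Sum>s\<in>S. if s \<in> e then g e else 0)"
    unfolding cardS g_def sum_distrib_left sum_divide_distrib by (intro sum.cong refl) auto
  also have "\<dots> = (\<Sum>s\<in>S. \<Sum>e\<in>E. if s \<in> e then g e else 0)" by (rule sum.swap)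
  also have "\<dots> \<le> (\<Sum>s\<in>S. real (card X))"
  proof (rule sum_mono)
    fix s assume s: "s \<in> S"
    define EsX where "EsX = {e\<in>E. s \<in> e \<and> e \<inter> X \<noteq> {}}"
    have finEsX: "finite EsX" unfolding EsX_def using finE by auto
    have "(\<Sum>e\<in>E. if s \<in> e then g e else 0) = (\<Sum>e\<in>E. if e \<in> EsX then g e else 0)"
      by (intro sum.cong refl) (auto simp: EsX_def g_def)
    also have "\<dots> = (\<Sum>e\<in>EsX. g e)" using finE by (simp add: sum.If_cases EsX_def Int_def)
    also have "\<dots> \<le> real (card EsX) * (real (card X) / (real c - 1))"
    proof (rule sum_bounded_above)
      fix e assume "e \<in> EsX"
      hence e: "e \<in> E" unfolding EsX_def by auto
      have "card (e \<inter> X) \<le> card X" using finX by (simp add: card_mono)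
      moreover have "real c - 1 \<le> real (card e) - 1" using ce[OF e] by simp
      moreover have "real c - 1 > 0" using c2 by simp
      ultimately show "g e \<le> real (card X) / (real c - 1)" unfolding g_def
        by (intro frac_le) auto
    qed
    also have "\<dots> \<le> (real c - 1) * (real (card X) / (real c - 1))"
      using cnt[OF s] c2 unfolding EsX_def[symmetric]
      by (intro mult_right_mono) (auto simp: of_nat_diff)
    also have "\<dots> = real (card X)" using c2 by simp
    finally show "(\<Sum>e\<in>E. if s \<in> e then g e else 0) \<le> real (card X)" .
  qed
  also have "\<dots> = real (card S) * real (card X)" by simp
  finally show ?thesis .
qed


lemma sum_two_sets:
  fixes x y :: real
  assumes fin: "finite V" and CV: "C \<subseteq> V" and BV: "B \<subseteq> V" and dis: "C \<inter> B = {}"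
  shows "(\<Sum>a\<in>V. if a \<in> C then x else if a \<in> B then y else 0) = x * real (card C) + y * real (card B)"
proof -
  have "(\<Sum>a\<in>V. if a \<in> C then x else if a \<in> B then y else 0)
      = (\<Sum>a\<in>V. (if a \<in> C then x else 0) + (if a \<in> B then y else 0))"
    using dis by (intro sum.cong refl) auto
  also have "\<dots> = (\<Sum>a\<in>V. if a \<in> C then x else 0) + (\<Sum>a\<in>V. if a \<in> B then y else 0)"
    by (rule sum.distrib)
  also have "(\<Sum>a\<in>V. if a \<in> C then x else 0) = x * real (card C)"
  proof -
    have "V \<inter> {a. a \<in> C} = C" using CV by auto
    thus ?thesis using fin by (simp add: sum.If_cases)
  qed
  also have "(\<Sum>a\<in>V. if a \<in> B then y else 0) = y * real (card B)"
  proof -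
    have "V \<inter> {a. a \<in> B} = B" using BV by auto
    thus ?thesis using fin by (simp add: sum.If_cases)
  qed
  finally show ?thesis .
qed

lemma graph_part:
  fixes V :: "'a set" and E :: "'a set set"
  assumes hg: "hypergraph V E"
    and conn: "connected_hg V E"
    and nonadj: "\<exists>i\<in>V. \<exists>j\<in>V. i \<noteq> j \<and> \<not> adjacent E i j"
    and degcr: "max_degree V E \<le> corank E"
  shows "\<exists>f. (\<Sum>a\<in>V. f a) = 0 \<and> (\<exists>a\<in>V. f a \<noteq> 0) \<and>
     (\<forall>\<alpha> \<beta>. QV V E (\<lambda>a. \<alpha> + \<beta> * f a) \<le> real (kappa_W V E) * (\<Sum>a\<in>V. (\<alpha> + \<beta> * f a)\<^sup>2))"
proof -
  have finV: "finite V" and EV: "\<And>e. e \<in> E \<Longrightarrow> e \<subseteq> V" and E2: "\<And>e. e \<in> E \<Longrightarrow> card e \<ge> 2"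
    using hg unfolding hypergraph_def by auto
  have finE: "finite E" using finV EV by (meson Pow_iff finite_Pow_iff rev_finite_subset subsetI)
  have fine: "\<And>e. e \<in> E \<Longrightarrow> finite e" using finV EV by (meson rev_finite_subset)
  have nc1: "num_components V E = 1" using conn unfolding connected_hg_def .
  define k where "k = kappa_W V E"
  define Cuts where "Cuts = {card S | S. weak_vertex_cut V E S}"
  have finCuts: "finite Cuts"
  proof -
    have "Cuts \<subseteq> card ` Pow V" unfolding Cuts_def weak_vertex_cut_def by auto
    thus ?thesis using finV by (meson finite_Pow_iff finite_imageI rev_finite_subset)
  qed
  obtain i j where ij: "i \<in> V" "j \<in> V" "i \<noteq> j" "\<not> adjacent E i j" using nonadj by auto
  have cut0: "weak_vertex_cut V E (V - {i, j})"
  proof -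
    have VS: "weak_del_V V (V - {i, j}) = {i, j}" unfolding weak_del_V_def using ij by auto
    have "(i, j) \<notin> reach_rel {i, j} (weak_del_E E (V - {i, j}))"
    proof
      assume "(i, j) \<in> reach_rel {i, j} (weak_del_E E (V - {i, j}))"
      hence "j \<in> {i}"
      proof (rule reach_closed)
        fix a b assume "a \<in> {i}" "b \<in> {i, j}" and ab: "adjacent (weak_del_E E (V - {i, j})) a b"
        have "a \<noteq> b \<and> (\<exists>e\<in>E. a \<in> e \<and> b \<in> e \<and> a \<notin> V - {i, j} \<and> b \<notin> V - {i, j})"
          using ab adj_weak_del[OF fine] by blast
        then obtain e where e: "e \<in> E" "a \<in> e" "b \<in> e" "a \<noteq> b" by auto
        show "b \<in> {i}"
        proof (rule ccontr)
          assume "b \<notin> {i}"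
          hence "adjacent E i j" using e \<open>a \<in> {i}\<close> \<open>b \<in> {i, j}\<close> unfolding adjacent_def by auto
          thus False using ij(4) by simp
        qed
      qed simp
      thus False using ij by auto
    qed
    hence "num_components {i, j} (weak_del_E E (V - {i, j})) \<ge> 2"
      using two_components_iff[of "{i,j}"] by blast
    thus ?thesis unfolding weak_vertex_cut_def VS nc1 by auto
  qed
  have "Cuts \<noteq> {}" using cut0 unfolding Cuts_def by blast
  hence "k \<in> Cuts" unfolding k_def kappa_W_def Cuts_def[symmetric] using finCuts by (rule Min_in[rotated])
  then obtain S where S: "weak_vertex_cut V E S" "card S = k" unfolding Cuts_def by auto
  have kmin: "k \<le> card S'" if "weak_vertex_cut V E S'" for S'
    unfolding k_def kappa_W_def Cuts_def[symmetric] using finCuts that by (auto simp: Cuts_def intro!: Min_le)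
  have SV: "S \<subseteq> V" using S unfolding weak_vertex_cut_def by auto
  have finS: "finite S" using SV finV by (meson rev_finite_subset)
  define r where "r = reach_rel (V - S) (weak_del_E E S)"
  have "num_components (V - S) (weak_del_E E S) \<ge> 2"
    using S unfolding weak_vertex_cut_def weak_del_V_def nc1 by auto
  then obtain u v where uv: "u \<in> V - S" "v \<in> V - S" "(u, v) \<notin> r"
    using two_components_iff[of "V - S"] finV unfolding r_def by blast
  define C where "C = r `` {u}"
  define B where "B = (V - S) - C"
  have eqr: "equiv (V - S) r" unfolding r_def by (rule reach_equiv)
  have CVS: "C \<subseteq> V - S" unfolding C_def r_def reach_rel_def by auto
  have uC: "u \<in> C" using eqr uv unfolding C_def by (auto simp: equiv_def refl_on_def)
  have vB: "v \<in> B" using uv unfolding B_def C_def by auto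
  have finC: "finite C" using CVS finV by (meson finite_Diff rev_finite_subset)
  have finB: "finite B" using finV unfolding B_def by auto
  have noCB: "\<not> (e \<inter> C \<noteq> {} \<and> e \<inter> B \<noteq> {})" if e: "e \<in> E" for e
  proof
    assume "e \<inter> C \<noteq> {} \<and> e \<inter> B \<noteq> {}"
    then obtain c b where cb: "c \<in> e" "c \<in> C" "b \<in> e" "b \<in> B" by auto
    have "c \<noteq> b" using cb unfolding B_def by auto
    moreover have "c \<notin> S" "b \<notin> S" using cb CVS unfolding B_def by auto
    ultimately have "adjacent (weak_del_E E S) c b" using adj_weak_del[OF fine, where S=S and a=c and b=b] e cb by blast
    hence "(c, b) \<in> r" unfolding r_def reach_rel_def using cb CVS unfolding B_def by auto
    moreover have "(u, c) \<in> r" using cb unfolding C_def by auto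
    ultimately have "(u, b) \<in> r" using eqr unfolding equiv_def trans_def by blast
    thus False using cb unfolding B_def C_def by auto
  qed
  \<comment> \<open>minimality: every vertex of S has an edge avoiding C, and one avoiding B\<close>
  have avoid: "\<exists>e\<in>E. s \<in> e \<and> e \<inter> X = {}" if s: "s \<in> S" and X: "X = C \<or> X = B" for s X
  proof (rule ccontr)
    assume "\<not> (\<exists>e\<in>E. s \<in> e \<and> e \<inter> X = {})"
    hence all: "\<And>e. e \<in> E \<Longrightarrow> s \<in> e \<Longrightarrow> e \<inter> X \<noteq> {}" by auto
    define S' where "S' = S - {s}"
    define Y where "Y = (if X = C then C \<union> {s} else C)"
    define r' where "r' = reach_rel (V - S') (weak_del_E E S')"
    have "(u, v) \<notin> r'"
    proof
      assume "(u, v) \<in> r'"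
      hence "v \<in> Y" unfolding r'_def
      proof (rule reach_closed)
        show "u \<in> Y" using uC unfolding Y_def by auto
        fix a b assume a: "a \<in> Y" and b: "b \<in> V - S'" and ab: "adjacent (weak_del_E E S') a b"
        show "b \<in> Y"
        proof (rule ccontr)
          assume bY: "b \<notin> Y"
          obtain e where e: "e \<in> E" "a \<in> e" "b \<in> e" "a \<notin> S'" "b \<notin> S'"
            using ab adj_weak_del[OF fine, where S=S' and a=a and b=b] by blast
          show False
          proof (cases "X = C")
            case True
            hence bB: "b \<in> B" using b bY unfolding Y_def B_def S'_def by auto
            show False
            proof (cases "a = s")
              case True
              hence "e \<inter> C \<noteq> {}" using all[OF e(1)] e(2) \<open>X = C\<close> by auto
              thus False using noCB[OF e(1)] bB e(3) by auto
            next
              case False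
              hence "a \<in> C" using a \<open>X = C\<close> unfolding Y_def by auto
              thus False using noCB[OF e(1)] bB e(2,3) by auto
            qed
          next
            case False
            hence XB: "X = B" using X by auto
            have aC: "a \<in> C" using a False unfolding Y_def by auto
            show False
            proof (cases "b = s")
              case True
              hence "e \<inter> B \<noteq> {}" using all[OF e(1)] e(3) XB by auto
              thus False using noCB[OF e(1)] aC e(2) by auto
            next
              case False
              hence "b \<in> B" using b bY \<open>X \<noteq> C\<close> unfolding Y_def B_def S'_def by auto
              thus False using noCB[OF e(1)] aC e(2,3) by auto
            qed
          qed
        qed
      qed
      moreover have "v \<notin> Y" using vB uv s unfolding Y_def B_def by auto
      ultimately show False by simp
    qed
    moreover have "u \<in> V - S'" "v \<in> V - S'" using uv unfolding S'_def by auto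
    ultimately have "num_components (V - S') (weak_del_E E S') \<ge> 2"
      using two_components_iff[of "V - S'"] finV unfolding r'_def by blast
    hence "weak_vertex_cut V E S'" unfolding weak_vertex_cut_def weak_del_V_def nc1 S'_def
      using SV by auto
    from kmin[OF this] have "card S \<le> card (S - {s})" using S(2) unfolding S'_def by simp
    moreover have "card (S - {s}) < card S" using s finS by (meson card_Diff1_less)
    ultimately show False by simp
  qed
  define cr where "cr = corank E"
  define c where "c = max 2 cr"
  have crle: "cr \<le> card e" if "e \<in> E" for e
    unfolding cr_def corank_def using finE that by (intro Min_le) auto
  have ce: "c \<le> card e" if "e \<in> E" for e unfolding c_def using crle[OF that] E2[OF that] by simp
  have cnt: "card {e\<in>E. s \<in> e \<and> e \<inter> X \<noteq> {}} \<le> c - 1" if s: "s \<in> S" and X: "X = C \<or> X = B" for s X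
  proof -
    obtain e0 where e0: "e0 \<in> E" "s \<in> e0" "e0 \<inter> X = {}" using avoid[OF s X] by auto
    have sub: "{e\<in>E. s \<in> e \<and> e \<inter> X \<noteq> {}} \<subset> {e\<in>E. s \<in> e}" using e0 by auto
    have "card {e\<in>E. s \<in> e \<and> e \<inter> X \<noteq> {}} < card {e\<in>E. s \<in> e}"
      using finE by (intro psubset_card_mono[OF _ sub]) auto
    also have "card {e\<in>E. s \<in> e} = degree E s" unfolding degree_def ..
    also have "\<dots> \<le> max_degree V E" unfolding max_degree_def using finV s SV by (intro Max_ge) auto
    also have "\<dots> \<le> c" using degcr unfolding c_def cr_def by simp
    finally show ?thesis by simp
  qed
  have RC: "(\<Sum>e\<in>E. real (card (e \<inter> C)) * real (card (e \<inter> S)) / (real (card e) - 1))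
      \<le> real k * real (card C)"
    using R_bound[OF finE fine finS finC _ ce cnt] S(2) unfolding c_def by auto
  have RB: "(\<Sum>e\<in>E. real (card (e \<inter> B)) * real (card (e \<inter> S)) / (real (card e) - 1))
      \<le> real k * real (card B)"
    using R_bound[OF finE fine finS finB _ ce cnt] S(2) unfolding c_def by auto
  define p where "p = real (card B)"
  define q where "q = - real (card C)"
  define f where "f = (\<lambda>a. if a \<in> C then p else if a \<in> B then q else 0)"
  have BVS: "B \<subseteq> V" "C \<subseteq> V" using CVS unfolding B_def by auto
  have disCB: "C \<inter> B = {}" unfolding B_def by auto
  have sumf: "(\<Sum>a\<in>V. f a) = 0" unfolding f_def
    using sum_two_sets[OF finV BVS(2) BVS(1) disCB] unfolding p_def q_def by simp
  have sumf2: "(\<Sum>a\<in>V. (f a)\<^sup>2) = p\<^sup>2 * real (card C) + q\<^sup>2 * real (card B)"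
  proof -
    have "(\<Sum>a\<in>V. (f a)\<^sup>2) = (\<Sum>a\<in>V. if a \<in> C then p\<^sup>2 else if a \<in> B then q\<^sup>2 else 0)"
      unfolding f_def by (intro sum.cong refl) auto
    thus ?thesis using sum_two_sets[OF finV BVS(2) BVS(1) disCB] by simp
  qed
  have fu: "f u \<noteq> 0" using uC vB finB unfolding f_def p_def by (auto simp: card_gt_0_iff)
  have main: "QV V E (\<lambda>a. \<alpha> + \<beta> * f a) \<le> real k * (\<Sum>a\<in>V. (\<alpha> + \<beta> * f a)\<^sup>2)" for \<alpha> \<beta>
  proof -
    define h where "h = (\<lambda>a. \<alpha> + \<beta> * f a)"
    define t where "t = (\<lambda>X e. real (card (e \<inter> X)) * real (card (e \<inter> S)) / (real (card e) - 1))"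
    have tnn: "t X e \<ge> 0" if "e \<in> E" for X e unfolding t_def using E2[OF that] by auto
    have edge: "Qe e h \<le> \<beta>\<^sup>2 * (p\<^sup>2 * t C e + q\<^sup>2 * t B e)" if e: "e \<in> E" for e
    proof -
      have eV: "e \<subseteq> V" using EV[OF e] .
      show ?thesis
      proof (cases "e \<inter> B = {}")
        case True
        have hv: "h a = (if a \<in> C then \<alpha> + \<beta> * p else \<alpha>)" if "a \<in> e" for a
          using that True unfolding h_def f_def by auto
        have "e = (e \<inter> C) \<union> (e \<inter> S)" using True eV unfolding B_def by auto
        hence "card e = card ((e \<inter> C) \<union> (e \<inter> S))" by simp
        also have "\<dots> = card (e \<inter> C) + card (e \<inter> S)"
          by (rule card_Un_disjoint) (use fine[OF e] CVS in auto)
        finally have "card e = card (e \<inter> C) + card (e \<inter> S)" .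
        hence "Qe e h = (\<beta> * p)\<^sup>2 * t C e"
          using Qe_two_valued[OF fine[OF e] E2[OF e] hv] unfolding t_def by simp
        moreover have "\<beta>\<^sup>2 * (q\<^sup>2 * t B e) \<ge> 0" using tnn[OF e, of B] by simp
        ultimately show ?thesis by (simp add: power_mult_distrib distrib_left mult_ac)
      next
        case False
        hence CE: "e \<inter> C = {}" using noCB[OF e] by auto
        have hv: "h a = (if a \<in> B then \<alpha> + \<beta> * q else \<alpha>)" if "a \<in> e" for a
          using that CE unfolding h_def f_def by auto
        have "e = (e \<inter> B) \<union> (e \<inter> S)" using CE eV unfolding B_def by auto
        hence "card e = card ((e \<inter> B) \<union> (e \<inter> S))" by simp
        also have "\<dots> = card (e \<inter> B) + card (e \<inter> S)"
          by (rule card_Un_disjoint) (use fine[OF e] in \<open>auto simp: B_def\<close>)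
        finally have "card e = card (e \<inter> B) + card (e \<inter> S)" .
        hence "Qe e h = (\<beta> * q)\<^sup>2 * t B e"
          using Qe_two_valued[OF fine[OF e] E2[OF e] hv] unfolding t_def by simp
        moreover have "\<beta>\<^sup>2 * (p\<^sup>2 * t C e) \<ge> 0" using tnn[OF e, of C] by simp
        ultimately show ?thesis by (simp add: power_mult_distrib distrib_left mult_ac)
      qed
    qed
    have "QV V E h = (\<Sum>e\<in>E. Qe e h)" by (rule QV_decomp[OF hg])
    also have "\<dots> \<le> (\<Sum>e\<in>E. \<beta>\<^sup>2 * (p\<^sup>2 * t C e + q\<^sup>2 * t B e))" by (rule sum_mono) (rule edge)
    also have "\<dots> = \<beta>\<^sup>2 * (p\<^sup>2 * (\<Sum>e\<in>E. t C e) + q\<^sup>2 * (\<Sum>e\<in>E. t B e))"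
      by (simp add: sum_distrib_left[symmetric] sum.distrib)
    also have "\<dots> \<le> \<beta>\<^sup>2 * (p\<^sup>2 * (real k * real (card C)) + q\<^sup>2 * (real k * real (card B)))"
      using RC RB unfolding t_def
      by (intro mult_left_mono add_mono) auto
    also have "\<dots> = real k * (\<beta>\<^sup>2 * (\<Sum>a\<in>V. (f a)\<^sup>2))" unfolding sumf2 by (simp add: algebra_simps)
    also have "\<dots> \<le> real k * (\<Sum>a\<in>V. (h a)\<^sup>2)"
    proof (rule mult_left_mono)
      have "(\<Sum>a\<in>V. (h a)\<^sup>2) = (\<Sum>a\<in>V. \<alpha>\<^sup>2 + 2 * \<alpha> * \<beta> * f a + \<beta>\<^sup>2 * (f a)\<^sup>2)"
        unfolding h_def by (intro sum.cong refl) (simp add: power2_eq_square algebra_simps)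
      also have "\<dots> = real (card V) * \<alpha>\<^sup>2 + 2 * \<alpha> * \<beta> * (\<Sum>a\<in>V. f a) + \<beta>\<^sup>2 * (\<Sum>a\<in>V. (f a)\<^sup>2)"
        by (simp add: sum.distrib sum_distrib_left)
      finally show "\<beta>\<^sup>2 * (\<Sum>a\<in>V. (f a)\<^sup>2) \<le> (\<Sum>a\<in>V. (h a)\<^sup>2)" using sumf by simp
    qed simp
    finally show ?thesis unfolding h_def .
  qed
  show ?thesis using sumf fu uv main unfolding k_def by blast
qed

lemma prod_list_mset_eq:
  "mset xs = mset ys \<Longrightarrow> (\<Prod>x\<leftarrow>xs. f x) = (\<Prod>x\<leftarrow>ys. (f x :: 'b :: comm_monoid_mult))"
  by (metis prod_mset_prod_list mset_map)

lemma laplacian_sym: "laplacian E a b = laplacian E b a"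
  unfolding laplacian_def by (simp add: conj_commute)

lemma quad_transport:
  fixes h :: "'a \<Rightarrow> real" and E :: "'a set set"
  assumes xs: "distinct xs" "set xs = V"
  defines "n \<equiv> length xs"
  defines "AM \<equiv> mat n n (\<lambda>(i,j). laplacian E (xs!i) (xs!j))"
  shows "vec n (\<lambda>i. h (xs!i)) \<bullet> (AM *\<^sub>v vec n (\<lambda>i. h (xs!i))) = QV V E h"
    "vec n (\<lambda>i. h (xs!i)) \<bullet> vec n (\<lambda>i. h (xs!i)) = (\<Sum>a\<in>V. (h a)\<^sup>2)"
proof -
  have bf: "bij_betw (\<lambda>i. xs ! i) {0..<n} V" unfolding n_def using bij_betw_nth[OF xs(1), of "{..<length xs}" V] xs(2)
    by (simp add: atLeast0LessThan)
  have re: "(\<Sum>i\<in>{0..<n}. F (xs ! i)) = (\<Sum>a\<in>V. F a)" for F :: "'a \<Rightarrow> real"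
    using sum.reindex_bij_betw[OF bf, of F] .
  have "vec n (\<lambda>i. h (xs!i)) \<bullet> (AM *\<^sub>v vec n (\<lambda>i. h (xs!i)))
     = (\<Sum>i\<in>{0..<n}. h (xs!i) * (\<Sum>j\<in>{0..<n}. laplacian E (xs!i) (xs!j) * h (xs!j)))"
    unfolding AM_def by (simp add: scalar_prod_def mult_mat_vec_def row_def)
  also have "\<dots> = (\<Sum>i\<in>{0..<n}. h (xs!i) * (\<Sum>b\<in>V. laplacian E (xs!i) b * h b))"
  proof (rule sum.cong[OF refl])
    fix i show "h (xs!i) * (\<Sum>j\<in>{0..<n}. laplacian E (xs!i) (xs!j) * h (xs!j)) =
        h (xs!i) * (\<Sum>b\<in>V. laplacian E (xs!i) b * h b)"
      using re[of "\<lambda>b. laplacian E (xs!i) b * h b"] by simp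
  qed
  also have "\<dots> = QV V E h" unfolding QV_def using re[of "\<lambda>a. h a * (\<Sum>b\<in>V. laplacian E a b * h b)"] by simp
  finally show "vec n (\<lambda>i. h (xs!i)) \<bullet> (AM *\<^sub>v vec n (\<lambda>i. h (xs!i))) = QV V E h" .
  have "vec n (\<lambda>i. h (xs!i)) \<bullet> vec n (\<lambda>i. h (xs!i)) = (\<Sum>i\<in>{0..<n}. (h (xs!i))\<^sup>2)"
    by (simp add: scalar_prod_def power2_eq_square)
  also have "\<dots> = (\<Sum>a\<in>V. (h a)\<^sup>2)" using re[of "\<lambda>a. (h a)\<^sup>2"] by simp
  finally show "vec n (\<lambda>i. h (xs!i)) \<bullet> vec n (\<lambda>i. h (xs!i)) = (\<Sum>a\<in>V. (h a)\<^sup>2)" .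
qed

hide_const (open) Char_Poly.eigenvalue

theorem theorem5:
  fixes V :: "'a set" and E :: "'a set set"
  assumes "hypergraph V E"
    and "connected_hg V E"
    and "card V \<ge> 3"
    and "\<exists>i\<in>V. \<exists>j\<in>V. i \<noteq> j \<and> \<not> adjacent E i j"
    and "max_degree V E \<le> corank E"
  shows "eigenvalue V (laplacian E) 2 \<le> real (kappa_W V E)"
proof -
  have finV: "finite V" using assms(1) unfolding hypergraph_def by auto
  obtain xs where xs: "set xs = V" "distinct xs" using finite_distinct_list[OF finV] by blast
  define n where "n = length xs"
  have nV: "n = card V" unfolding n_def using distinct_card[OF xs(2)] xs(1) by simp
  define AM where "AM = mat n n (\<lambda>(i,j). laplacian E (xs!i) (xs!j))"
  have AM: "AM \<in> carrier_mat n n" unfolding AM_def by simp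
  have AMsym: "AM\<^sup>T = AM" unfolding AM_def by (rule eq_matI) (auto simp: laplacian_sym)
  have cp: "char_poly_on V (laplacian E) = char_poly AM"
    using char_poly_on_transport[OF xs(2,1)] unfolding AM_def n_def .
  obtain P D where PD: "P \<in> carrier_mat n n" "D \<in> carrier_mat n n" "diagonal_mat D"
    "P\<^sup>T * P = 1\<^sub>m n" "P * P\<^sup>T = 1\<^sub>m n" "AM = P * D * P\<^sup>T"
    using spectral[OF AM AMsym] by blast
  have "similar_mat_wit AM D P P\<^sup>T" unfolding similar_mat_wit_def Let_def using PD AM by auto
  hence "char_poly AM = char_poly D" by (intro char_poly_similar) (auto simp: similar_mat_def)
  also have "upper_triangular D" using PD(2,3) unfolding diagonal_mat_def upper_triangular_def by auto
  hence "char_poly D = (\<Prod>x\<leftarrow>diag_mat D. [:- x, 1:])" using char_poly_upper_triangular[OF PD(2)] by simp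
  finally have cpD: "char_poly AM = (\<Prod>x\<leftarrow>diag_mat D. [:- x, 1:])" .
  define es where "es = sort (diag_mat D)"
  have es_sorted: "sorted es" unfolding es_def by simp
  have cpes: "char_poly AM = (\<Prod>x\<leftarrow>es. [:- x, 1:])" unfolding cpD es_def
    by (rule prod_list_mset_eq) simp
  have "eigenvalues_sorted V (laplacian E) = es"
    unfolding eigenvalues_sorted_def
  proof (rule the_equality)
    show "sorted es \<and> char_poly_on V (laplacian E) = (\<Prod>x\<leftarrow>es. [:- x, 1:])"
      using es_sorted cp cpes by simp
    fix ys assume ys: "sorted ys \<and> char_poly_on V (laplacian E) = (\<Prod>x\<leftarrow>ys. [:- x, 1:])"
    hence "mset ys = mset es" using lin_prod_mset[of ys es] cp cpes by simp
    hence "sort es = ys" using ys by (intro properties_for_sort) auto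
    thus "ys = es" using es_sorted by (simp add: sorted_sort_id)
  qed
  hence ev2: "eigenvalue V (laplacian E) 2 = es ! 1" unfolding Defs.eigenvalue_def by simp
  obtain f where f: "(\<Sum>a\<in>V. f a) = 0" "\<exists>a\<in>V. f a \<noteq> 0"
    "\<And>\<alpha> \<beta>. QV V E (\<lambda>a. \<alpha> + \<beta> * f a) \<le> real (kappa_W V E) * (\<Sum>a\<in>V. (\<alpha> + \<beta> * f a)\<^sup>2)"
    using graph_part[OF assms(1,2,4,5)] by blast
  define g1 where "g1 = vec n (\<lambda>i. 1::real)"
  define g2 where "g2 = vec n (\<lambda>i. f (xs!i))"
  have comb: "a \<cdot>\<^sub>v g1 + b \<cdot>\<^sub>v g2 = vec n (\<lambda>i. (\<lambda>x. a + b * f x) (xs!i))" for a b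
    unfolding g1_def g2_def by (rule eq_vecI) auto
  have xsV: "\<And>x. x \<in> V \<Longrightarrow> \<exists>i<n. xs ! i = x" using xs(1) unfolding n_def by (metis in_set_conv_nth)
  show ?thesis unfolding ev2
  proof (rule lambda2_bound[OF AM AMsym _ es_sorted cpes[symmetric, symmetric]])
    show "2 \<le> n" using assms(3) nV by simp
    show "g1 \<in> carrier_vec n" "g2 \<in> carrier_vec n" unfolding g1_def g2_def by auto
    fix a b :: real
    show "(a \<cdot>\<^sub>v g1 + b \<cdot>\<^sub>v g2) \<bullet> (AM *\<^sub>v (a \<cdot>\<^sub>v g1 + b \<cdot>\<^sub>v g2))
         \<le> real (kappa_W V E) * ((a \<cdot>\<^sub>v g1 + b \<cdot>\<^sub>v g2) \<bullet> (a \<cdot>\<^sub>v g1 + b \<cdot>\<^sub>v g2))"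
      unfolding comb AM_def n_def using quad_transport[OF xs(2,1), where h="\<lambda>x. a + b * f x"] f(3)[of a b]
      by simp
  next
    fix a b :: real
    assume "a \<cdot>\<^sub>v g1 + b \<cdot>\<^sub>v g2 = 0\<^sub>v n"
    hence "vec n (\<lambda>i. (\<lambda>x. a + b * f x) (xs!i)) = 0\<^sub>v n" unfolding comb .
    hence z: "a + b * f (xs ! i) = 0" if "i < n" for i
      using that by (metis index_vec index_zero_vec(1))
    have zV: "a + b * f x = 0" if "x \<in> V" for x using xsV[OF that] z by blast
    have "(\<Sum>x\<in>V. a + b * f x) = 0" using zV by simp
    hence "real (card V) * a + b * (\<Sum>x\<in>V. f x) = 0" by (simp add: sum.distrib sum_distrib_left)
    hence a0: "a = 0" using f(1) assms(3) by simp
    obtain x0 where "x0 \<in> V" "f x0 \<noteq> 0" using f(2) by blast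
    hence "b = 0" using zV[of x0] a0 by simp
    thus "a = 0 \<and> b = 0" using a0 by simp
  qed
qed

end
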